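(* Let $T$ be an $spo$-tableau and $x_1,x_2\in B_0$ with $x_1\le x_2$. Suppose that neither the insertion of $x_1$ into $T$ nor the insertion of $x_2$ into $U=T\leftarrow x_1$ causes a cancellation. Let $S_1$ be the new box of $U$ (not in the shape of $T$) and $S_2$ the new box of $U\leftarrow x_2$ (not in the shape of $U$). Then $S_2$ lies in a column strictly to the right of $S_1$ and in a row weakly above $S_1$.
   Context: Fix positive integers $m,n$. Let $B_0=\{1,\bar1,2,\bar2,\dots,m,\bar m\}$, $B_1=\{1^\circ,\dots,n^\circ\}$, $B=B_0\cup B_1$, totally ordered by $1<\bar1<2<\bar2<\cdots<m<\bar m<1^\circ<\cdots<n^\circ$. Rows are numbered from the top starting at 1, columns from the left. An $spo$-tableau of shape $\lambda$ is a filling of the Young diagram of $\lambda$ with entries of $B$ such that (i) the boxes containing entries of $B_0$ form a Young diagram $\sigma\subseteq\lambda$, and this part is weakly increasing along rows, strictly increasing down columns, and every entry in row $i$ is $\ge i$; (ii) the entries of $B_1$ (filling $\lambda/\sigma$) are strictly increasing along rows and weakly increasing down columns. $spo$-insertion: a forward jeu de taquin slide on an empty box with right neighbour $a$ and lower neighbour $b$ moves $a$ left into the empty box if $a<b$ or ($a=b\in B_1$), and moves $b$ up into the empty box if $b<a$ or ($a=b\in B_0$); if only one neighbour exists it moves in; slides are repeated until the empty box has no right or lower neighbour, and then that box is deleted. Inserting $z\in B_0$ into row $r$: if no entry of the row exceeds $z$, append $z$ in a new box at the end of the row; otherwise let $w$ be the least entry of the row with $w>z$; if $z=r$ (unbarred)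 and $w=\bar r$, delete $\bar r$ leaving an empty box (a cancellation); otherwise replace $w$ by $z$, displacing $w$. Inserting $z\in B_1$ into column $c$: if no entry of the column exceeds $z$, append $z$ in a new box at the bottom; otherwise replace the least entry $w>z$ of the column by $z$, displacing $w$. To insert $x\in B_0$ into $T$ (result $T\leftarrow x$) start by inserting $x$ into row 1; to insert $x\in B_1$ (result $x\rightarrow T$) start by inserting $x$ into column 1. Whenever an entry $w$ is displaced from a box in row $r$, column $c$: if $w\in B_0$ insert it into row $r+1$; if $w\in B_1$ insert it into column $c+1$. The process ends when an entry is placed in a new box, or when a cancellation occurs, in which case the empty box is moved to an outer corner by forward slides and deleted. If no cancellation occurs the result has exactly one new box. *)

theory Defs
  imports Main "HOL-Library.Product_Lexorder"
begin

text \<open>Alphabet B: Ub i is i, Br i is i-bar, Ci j is j-circle.\<close>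
datatype entry = Ub nat | Br nat | Ci nat

fun rank :: "entry \<Rightarrow> nat \<times> nat" where
  "rank (Ub i) = (0, 2 * i)"
| "rank (Br i) = (0, 2 * i + 1)"
| "rank (Ci j) = (1, j)"

lemma rank_inj: "rank a = rank b \<Longrightarrow> a = b"
  by (cases a; cases b; auto; presburger)

instantiation entry :: linorder
begin
definition less_eq_entry :: "entry \<Rightarrow> entry \<Rightarrow> bool" where
  "less_eq_entry a b \<longleftrightarrow> rank a \<le> rank b"
definition less_entry :: "entry \<Rightarrow> entry \<Rightarrow> bool" where
  "less_entry a b \<longleftrightarrow> rank a < rank b"
instance
  by standard (auto simp: less_eq_entry_def less_entry_def intro: rank_inj)
end

fun isB0 :: "entry \<Rightarrow> bool" where
  "isB0 (Ci _) = False"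
| "isB0 _ = True"

abbreviation isB1 :: "entry \<Rightarrow> bool" where "isB1 e \<equiv> \<not> isB0 e"

definition inB0 :: "nat \<Rightarrow> entry \<Rightarrow> bool" where
  "inB0 m e \<longleftrightarrow> (\<exists>i. 1 \<le> i \<and> i \<le> m \<and> (e = Ub i \<or> e = Br i))"

definition inB :: "nat \<Rightarrow> nat \<Rightarrow> entry \<Rightarrow> bool" where
  "inB m n e \<longleftrightarrow> inB0 m e \<or> (\<exists>j. 1 \<le> j \<and> j \<le> n \<and> e = Ci j)"

text \<open>A filling: partial map from positions (row, column), both 1-based, to entries.\<close>
type_synonym tab = "nat \<times> nat \<Rightarrow> entry option"

definition is_young :: "(nat \<times> nat) set \<Rightarrow> bool" where
  "is_young D \<longleftrightarrow> finite D \<and> (\<forall>(i,j)\<in>D. 1 \<le> i \<and> 1 \<le> j \<and>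
      (\<forall>i' j'. 1 \<le> i' \<and> i' \<le> i \<and> 1 \<le> j' \<and> j' \<le> j \<longrightarrow> (i',j') \<in> D))"

definition spo_tableau :: "nat \<Rightarrow> nat \<Rightarrow> tab \<Rightarrow> bool" where
  "spo_tableau m n T \<longleftrightarrow>
     is_young (dom T) \<and>
     (\<forall>p e. T p = Some e \<longrightarrow> inB m n e) \<and>
     is_young {p. \<exists>e. T p = Some e \<and> isB0 e} \<and>
     (\<forall>i j a b. T (i,j) = Some a \<longrightarrow> T (i,j+1) = Some b \<longrightarrow> isB0 a \<longrightarrow> isB0 b \<longrightarrow> a \<le> b) \<and>
     (\<forall>i j a b. T (i,j) = Some a \<longrightarrow> T (i+1,j) = Some b \<longrightarrow> isB0 a \<longrightarrow> isB0 b \<longrightarrow> a < b) \<and>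
     (\<forall>i j a. T (i,j) = Some a \<longrightarrow> isB0 a \<longrightarrow> Ub i \<le> a) \<and>
     (\<forall>i j a b. T (i,j) = Some a \<longrightarrow> T (i,j+1) = Some b \<longrightarrow> isB1 a \<longrightarrow> isB1 b \<longrightarrow> a < b) \<and>
     (\<forall>i j a b. T (i,j) = Some a \<longrightarrow> T (i+1,j) = Some b \<longrightarrow> isB1 a \<longrightarrow> isB1 b \<longrightarrow> a \<le> b)"

datatype istate =
    RowIns entry nat
  | ColIns entry nat
  | Hole "nat \<times> nat"           \<comment> \<open>empty box being slid outwards (after a cancellation)\<close>
  | NewBox "nat \<times> nat"
  | Cancelled

definition rowlen :: "tab \<Rightarrow> nat \<Rightarrow> nat" where
  "rowlen T r = card {c. T (r,c) \<noteq> None}"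

definition collen :: "tab \<Rightarrow> nat \<Rightarrow> nat" where
  "collen T c = card {r. T (r,c) \<noteq> None}"

definition displace :: "entry \<Rightarrow> nat \<times> nat \<Rightarrow> istate" where
  "displace w p = (if isB0 w then RowIns w (fst p + 1) else ColIns w (snd p + 1))"

definition move_into :: "tab \<Rightarrow> nat \<times> nat \<Rightarrow> nat \<times> nat \<Rightarrow> entry \<Rightarrow> tab \<times> istate" where
  "move_into T h q a = (T(h := Some a, q := None), Hole q)"

fun step :: "tab \<times> istate \<Rightarrow> tab \<times> istate" where
  "step (T, RowIns z r) =
     (if \<exists>c. \<exists>e. T (r,c) = Some e \<and> z < e then
        (let c = (LEAST c. \<exists>e. T (r,c) = Some e \<and> z < e); w = the (T (r,c)) in
         if z = Ub r \<and> w = Br r then (T((r,c) := None), Hole (r,c))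
         else (T((r,c) := Some z), displace w (r,c)))
      else (T((r, rowlen T r + 1) := Some z), NewBox (r, rowlen T r + 1)))"
| "step (T, ColIns z c) =
     (if \<exists>r. \<exists>e. T (r,c) = Some e \<and> z < e then
        (let r = (LEAST r. \<exists>e. T (r,c) = Some e \<and> z < e); w = the (T (r,c)) in
         (T((r,c) := Some z), displace w (r,c)))
      else (T((collen T c + 1, c) := Some z), NewBox (collen T c + 1, c)))"
| "step (T, Hole (i,j)) =
     (case (T (i,j+1), T (i+1,j)) of
        (Some a, Some b) \<Rightarrow>
           if a < b \<or> (a = b \<and> isB1 a) then move_into T (i,j) (i,j+1) a
           else move_into T (i,j) (i+1,j) b
      | (Some a, None) \<Rightarrow> move_into T (i,j) (i,j+1) a
      | (None, Some b) \<Rightarrow> move_into T (i,j) (i+1,j) b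
      | (None, None) \<Rightarrow> (T, Cancelled))"
| "step (T, NewBox p) = (T, NewBox p)"
| "step (T, Cancelled) = (T, Cancelled)"

definition ins_newbox :: "tab \<Rightarrow> entry \<Rightarrow> tab \<Rightarrow> nat \<times> nat \<Rightarrow> bool" where
  "ins_newbox T x U S \<longleftrightarrow> (\<exists>k. (step ^^ k) (T, RowIns x 1) = (U, NewBox S))"

end

theory Submission
  imports Defs
begin

lemma B0_less_B1: "isB0 a \<Longrightarrow> isB1 b \<Longrightarrow> a < b"
  by (cases a; cases b; simp add: less_entry_def)
lemma le_B1: "a \<le> b \<Longrightarrow> isB1 a \<Longrightarrow> isB1 b"
  by (cases a; cases b; auto simp: less_eq_entry_def)
lemma less_B1: "a < b \<Longrightarrow> isB1 a \<Longrightarrow> isB1 b"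
  using le_B1 less_imp_le by blast
lemma le_B0: "a \<le> b \<Longrightarrow> isB0 b \<Longrightarrow> isB0 a"
  using le_B1 by blast

inductive run :: "tab \<Rightarrow> istate \<Rightarrow> tab \<Rightarrow> nat \<times> nat \<Rightarrow> bool" where
  run_new: "run T (NewBox p) T p"
| run_step: "step (T, s) = (T', s') \<Longrightarrow> (\<forall>p. s \<noteq> NewBox p) \<Longrightarrow> run T' s' U S \<Longrightarrow> run T s U S"

lemma step_hole: "step (T, Hole q) = (T', s') \<Longrightarrow> (\<exists>q'. s' = Hole q') \<or> s' = Cancelled"
proof -
  obtain i j where q: "q = (i,j)" by fastforce
  assume "step (T, Hole q) = (T', s')"
  then show ?thesis unfolding q by (auto simp: move_into_def split: option.splits if_splits)
qed

lemma run_not_hole: "run T s U S \<Longrightarrow> (\<forall>q. s \<noteq> Hole q) \<and> s \<noteq> Cancelled"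
proof (induction rule: run.induct)
  case (run_new T p) then show ?case by simp
next
  case (run_step T s T' s' U S)
  show ?case
  proof (intro conjI allI notI)
    fix q assume "s = Hole q"
    with step_hole run_step show False by blast
  next
    assume "s = Cancelled"
    with run_step show False by auto
  qed
qed

lemma funpow_newbox: "(step ^^ k) (T, NewBox p) = (T, NewBox p)"
  by (induction k) auto

lemma funpow_hole: "s = Hole q \<or> s = Cancelled \<Longrightarrow> (\<exists>q'. snd ((step ^^ k) (T, s)) = Hole q') \<or> snd ((step ^^ k) (T, s)) = Cancelled"
proof (induction k arbitrary: T s q)
  case 0 then show ?case by auto
next
  case (Suc k)
  obtain T' s' where st: "step (T, s) = (T', s')" by fastforce
  have "(\<exists>q'. s' = Hole q') \<or> s' = Cancelled"
  proof (cases "s = Cancelled")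
    case True then show ?thesis using st by simp
  next
    case False then have "s = Hole q" using Suc.prems by blast
    then show ?thesis using st step_hole by blast
  qed
  then have "(\<exists>q'. snd ((step ^^ k) (T', s')) = Hole q') \<or> snd ((step ^^ k) (T', s')) = Cancelled"
    using Suc.IH by blast
  then show ?case by (metis comp_apply funpow_Suc_right st)
qed

lemma funpow_run: "(step ^^ k) (T, s) = (U, NewBox S) \<Longrightarrow> run T s U S"
proof (induction k arbitrary: T s)
  case 0 then show ?case by (auto intro: run_new)
next
  case (Suc k)
  show ?case
  proof (cases "\<exists>p. s = NewBox p")
    case True
    then obtain p where "s = NewBox p" by blast
    with Suc.prems show ?thesis by (simp add: funpow_Suc_right funpow_newbox run_new)
  next
    case False
    obtain T' s' where st: "step (T, s) = (T', s')" by fastforce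
    have "(step ^^ k) (T', s') = (U, NewBox S)" using Suc.prems st by (metis comp_apply funpow_Suc_right)
    then have "run T' s' U S" by (rule Suc.IH)
    then show ?thesis using run_step[OF st] False by blast
  qed
qed

lemma run_newbox_inv: "run T (NewBox p) U S \<Longrightarrow> U = T \<and> S = p"
  by (cases rule: run.cases) blast+

lemma run_inv: "run T s U S \<Longrightarrow> \<forall>p. s \<noteq> NewBox p \<Longrightarrow> step (T, s) = (T', s') \<Longrightarrow> run T' s' U S"
  by (cases rule: run.cases) auto

lemma young_mem: "is_young D \<Longrightarrow> (i,j) \<in> D \<Longrightarrow> 1 \<le> i \<and> 1 \<le> j"
  unfolding is_young_def by blast

lemma young_down: "is_young D \<Longrightarrow> (i,j) \<in> D \<Longrightarrow> 1 \<le> i' \<Longrightarrow> i' \<le> i \<Longrightarrow> 1 \<le> j' \<Longrightarrow> j' \<le> j \<Longrightarrow> (i',j') \<in> D"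
  unfolding is_young_def by blast

lemma young_insert:
  assumes y: "is_young D" and "1 \<le> i" "1 \<le> j" and up: "i = 1 \<or> (i-1,j) \<in> D" and lf: "j = 1 \<or> (i,j-1) \<in> D"
  shows "is_young (insert (i,j) D)"
proof -
  have main: "1 \<le> a \<and> 1 \<le> b \<and> (\<forall>i' j'. 1 \<le> i' \<and> i' \<le> a \<and> 1 \<le> j' \<and> j' \<le> b \<longrightarrow> (i',j') \<in> insert (i,j) D)"
    if x: "(a,b) \<in> insert (i,j) D" for a b
  proof (cases "(a,b) = (i,j)")
    case True
    have "(i', j') \<in> insert (i, j) D" if "1 \<le> i'" "i' \<le> i" "1 \<le> j'" "j' \<le> j" for i' j'
    proof (cases "i' = i")
      case True
      show ?thesis
      proof (cases "j' = j")
        case False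
        then have "j \<noteq> 1" "j' \<le> j - 1" using that by auto
        then show ?thesis using lf young_down[OF y, of i "j-1" i' j'] that True by auto
      qed (simp add: True)
    next
      case False
      then have "i \<noteq> 1" "i' \<le> i - 1" using that by auto
      then show ?thesis using up young_down[OF y, of "i-1" j i' j'] that by auto
    qed
    then show ?thesis using True assms by simp
  next
    case False
    then have ab': "(a,b) \<in> D" using x by auto
    have "1 \<le> a \<and> 1 \<le> b" using young_mem[OF y ab'] .
    moreover have "\<forall>i' j'. 1 \<le> i' \<and> i' \<le> a \<and> 1 \<le> j' \<and> j' \<le> b \<longrightarrow> (i', j') \<in> D"
      using young_down[OF y ab'] by blast
    ultimately show ?thesis by auto
  qed
  have "finite (insert (i, j) D)" using y unfolding is_young_def by simp
  then show ?thesis unfolding is_young_def using main by blast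
qed

lemma interval_set:
  assumes f: "finite (A::nat set)" and pos: "\<And>c. c \<in> A \<Longrightarrow> 1 \<le> c" and dn: "\<And>c c'. c \<in> A \<Longrightarrow> 1 \<le> c' \<Longrightarrow> c' \<le> c \<Longrightarrow> c' \<in> A"
  shows "A = {1..card A}"
proof (cases "A = {}")
  case False
  have m: "Max A \<in> A" using False f Max_in by blast
  have "A = {1..Max A}"
  proof
    show "A \<subseteq> {1..Max A}"
    proof
      fix c assume "c \<in> A"
      then show "c \<in> {1..Max A}" using pos Max_ge[OF f] by simp
    qed
    show "{1..Max A} \<subseteq> A"
    proof
      fix c assume "c \<in> {1..Max A}"
      then show "c \<in> A" using dn[OF m] by simp
    qed
  qed
  then have "card A = Max A" by (metis card_atLeastAtMost diff_Suc_1)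
  then show ?thesis using \<open>A = {1..Max A}\<close> by simp
qed simp

lemma rowset_eq:
  assumes y: "is_young (dom W)"
  shows "{c. W (r,c) \<noteq> None} = {1..rowlen W r}"
proof -
  have f: "finite {c. W (r,c) \<noteq> None}"
  proof -
    have "{c. W (r,c) \<noteq> None} \<subseteq> snd ` dom W" by (force simp: image_iff)
    moreover have "finite (dom W)" using y unfolding is_young_def by simp
    ultimately show ?thesis using finite_subset by blast
  qed
  have pos: "1 \<le> c" if "c \<in> {c. W (r,c) \<noteq> None}" for c
    using young_mem[OF y, of r c] that by auto
  have dn: "c' \<in> {c. W (r,c) \<noteq> None}" if "c \<in> {c. W (r,c) \<noteq> None}" "1 \<le> c'" "c' \<le> c" for c c'
  proof -
    have "(r,c) \<in> dom W" using that by auto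
    then have "(r,c') \<in> dom W" using young_down[OF y, of r c r c'] young_mem[OF y, of r c] that by simp
    then show ?thesis by auto
  qed
  show ?thesis using interval_set[OF f pos dn] unfolding rowlen_def by simp
qed

lemma rowlen_iff: "is_young (dom W) \<Longrightarrow> W (r,c) \<noteq> None \<longleftrightarrow> 1 \<le> c \<and> c \<le> rowlen W r"
proof -
  assume y: "is_young (dom W)"
  have "W (r,c) \<noteq> None \<longleftrightarrow> c \<in> {c. W (r,c) \<noteq> None}" by simp
  also have "\<dots> \<longleftrightarrow> c \<in> {1..rowlen W r}" using rowset_eq[OF y] by simp
  finally show ?thesis by simp
qed

lemma colset_eq:
  assumes y: "is_young (dom W)"
  shows "{r. W (r,c) \<noteq> None} = {1..collen W c}"
proof -
  have f: "finite {r. W (r,c) \<noteq> None}"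
  proof -
    have "{r. W (r,c) \<noteq> None} \<subseteq> fst ` dom W" by (force simp: image_iff)
    moreover have "finite (dom W)" using y unfolding is_young_def by simp
    ultimately show ?thesis using finite_subset by blast
  qed
  have pos: "1 \<le> r" if "r \<in> {r. W (r,c) \<noteq> None}" for r
    using young_mem[OF y, of r c] that by auto
  have dn: "r' \<in> {r. W (r,c) \<noteq> None}" if "r \<in> {r. W (r,c) \<noteq> None}" "1 \<le> r'" "r' \<le> r" for r r'
  proof -
    have "(r,c) \<in> dom W" using that by auto
    then have "(r',c) \<in> dom W" using young_down[OF y, of r c r' c] young_mem[OF y, of r c] that by simp
    then show ?thesis by auto
  qed
  show ?thesis using interval_set[OF f pos dn] unfolding collen_def by simp
qed

lemma collen_iff: "is_young (dom W) \<Longrightarrow> W (r,c) \<noteq> None \<longleftrightarrow> 1 \<le> r \<and> r \<le> collen W c"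
proof -
  assume y: "is_young (dom W)"
  have "W (r,c) \<noteq> None \<longleftrightarrow> r \<in> {r. W (r,c) \<noteq> None}" by simp
  also have "\<dots> \<longleftrightarrow> r \<in> {1..collen W c}" using colset_eq[OF y] by simp
  finally show ?thesis by simp
qed

definition RowOrd :: "tab \<Rightarrow> bool" where
  "RowOrd W \<longleftrightarrow> (\<forall>i j a b. W (i,j) = Some a \<longrightarrow> W (i, Suc j) = Some b \<longrightarrow> a \<le> b \<and> (isB1 a \<longrightarrow> a < b))"
definition ColOrd :: "tab \<Rightarrow> bool" where
  "ColOrd W \<longleftrightarrow> (\<forall>i j a b. W (i,j) = Some a \<longrightarrow> W (Suc i, j) = Some b \<longrightarrow> a \<le> b \<and> (isB0 a \<longrightarrow> a < b))"
definition tab_ok :: "tab \<Rightarrow> bool" where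
  "tab_ok W \<longleftrightarrow> is_young (dom W) \<and> RowOrd W \<and> ColOrd W"

lemma tab_young: "tab_ok W \<Longrightarrow> is_young (dom W)" by (simp add: tab_ok_def)

lemma row_trans:
  assumes t: "tab_ok W" and a: "W (i,j) = Some a" and b: "W (i,j+d) = Some b"
  shows "a \<le> b"
  using b
proof (induction d arbitrary: b)
  case 0 then show ?case using a by simp
next
  case (Suc d)
  have y: "is_young (dom W)" using t tab_young by blast
  have d1: "(i,j) \<in> dom W" "(i, j + Suc d) \<in> dom W" using a Suc.prems by auto
  have "(i, j+d) \<in> dom W"
    using young_down[OF y d1(2), of i "j+d"] young_mem[OF y d1(2)] young_mem[OF y d1(1)] by auto
  then obtain c where c: "W (i,j+d) = Some c" by auto
  have "c \<le> b" using t Suc.prems c unfolding tab_ok_def RowOrd_def by fastforce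
  then show ?case using Suc.IH[OF c] by simp
qed

lemma row_trans': "tab_ok W \<Longrightarrow> W (i,j) = Some a \<Longrightarrow> W (i,j') = Some b \<Longrightarrow> j \<le> j' \<Longrightarrow> a \<le> b"
  using row_trans[of W i j a "j' - j" b] by simp

lemma col_trans:
  assumes t: "tab_ok W" and a: "W (i,j) = Some a" and b: "W (i+d,j) = Some b"
  shows "a \<le> b"
  using b
proof (induction d arbitrary: b)
  case 0 then show ?case using a by simp
next
  case (Suc d)
  have y: "is_young (dom W)" using t tab_young by blast
  have d1: "(i,j) \<in> dom W" "(i + Suc d, j) \<in> dom W" using a Suc.prems by auto
  have "(i+d, j) \<in> dom W"
    using young_down[OF y d1(2), of "i+d" j] young_mem[OF y d1(2)] young_mem[OF y d1(1)] by auto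
  then obtain c where c: "W (i+d,j) = Some c" by auto
  have "c \<le> b" using t Suc.prems c unfolding tab_ok_def ColOrd_def by fastforce
  then show ?case using Suc.IH[OF c] by simp
qed

lemma col_trans': "tab_ok W \<Longrightarrow> W (i,j) = Some a \<Longrightarrow> W (i',j) = Some b \<Longrightarrow> i \<le> i' \<Longrightarrow> a \<le> b"
  using col_trans[of W i j a "i' - i" b] by simp


lemma displace_B0: "isB0 w \<Longrightarrow> displace w (i,j) = RowIns w (Suc i)"
  by (simp add: displace_def)
lemma displace_B1: "isB1 w \<Longrightarrow> displace w (i,j) = ColIns w (Suc j)"
  by (simp add: displace_def)

lemma row_run:
  assumes R: "run W (RowIns z r) U S"
  obtains (new) "\<not>(\<exists>c e. W (r,c) = Some e \<and> z < e)" "U = W((r, rowlen W r + 1) := Some z)" "S = (r, rowlen W r + 1)"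
  | (bump) c w where "W (r,c) = Some w" "z < w" "\<forall>j<c. \<forall>e. W (r,j) = Some e \<longrightarrow> \<not> z < e"
       "run (W((r,c) := Some z)) (displace w (r,c)) U S" "step (W, RowIns z r) = (W((r,c) := Some z), displace w (r,c))"
proof (cases "\<exists>c e. W (r,c) = Some e \<and> z < e")
  case False
  then have st: "step (W, RowIns z r) = (W((r, rowlen W r + 1) := Some z), NewBox (r, rowlen W r + 1))"
    using False unfolding step.simps by (simp only: if_False not_ex[symmetric] simp_thms)
  have "run (W((r, rowlen W r + 1) := Some z)) (NewBox (r, rowlen W r + 1)) U S"
    using run_inv[OF R _ st] by simp
  then show ?thesis using new False run_newbox_inv by blast
next
  case True
  define c where "c = (LEAST c. \<exists>e. W (r,c) = Some e \<and> z < e)"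
  have ex: "\<exists>e. W (r,c) = Some e \<and> z < e" unfolding c_def using True by (rule LeastI_ex)
  then obtain w where w: "W (r,c) = Some w" "z < w" by blast
  have min: "\<forall>j<c. \<forall>e. W (r,j) = Some e \<longrightarrow> \<not> z < e"
    unfolding c_def using not_less_Least by blast
  have cl: "(LEAST c. \<exists>e. W (r,c) = Some e \<and> z < e) = c" by (simp add: c_def)
  show ?thesis
  proof (cases "z = Ub r \<and> w = Br r")
    case True
    then have st: "step (W, RowIns z r) = (W((r,c) := None), Hole (r,c))"
      using \<open>\<exists>c e. W (r,c) = Some e \<and> z < e\<close> w unfolding step.simps Let_def cl by auto
    have "run (W((r,c) := None)) (Hole (r,c)) U S" using run_inv[OF R _ st] by simp
    then show ?thesis using run_not_hole by blast
  next
    case False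
    then have st: "step (W, RowIns z r) = (W((r,c) := Some z), displace w (r,c))"
      using \<open>\<exists>c e. W (r,c) = Some e \<and> z < e\<close> w unfolding step.simps Let_def cl by auto
    have "run (W((r,c) := Some z)) (displace w (r,c)) U S" using run_inv[OF R _ st] by simp
    then show ?thesis using bump w min st by blast
  qed
qed

lemma col_run:
  assumes R: "run W (ColIns y d) U S"
  obtains (new) "\<not>(\<exists>i e. W (i,d) = Some e \<and> y < e)" "U = W((collen W d + 1, d) := Some y)" "S = (collen W d + 1, d)"
  | (bump) i w where "W (i,d) = Some w" "y < w" "\<forall>k<i. \<forall>e. W (k,d) = Some e \<longrightarrow> \<not> y < e"
       "run (W((i,d) := Some y)) (displace w (i,d)) U S" "step (W, ColIns y d) = (W((i,d) := Some y), displace w (i,d))"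
proof (cases "\<exists>i e. W (i,d) = Some e \<and> y < e")
  case False
  then have st: "step (W, ColIns y d) = (W((collen W d + 1, d) := Some y), NewBox (collen W d + 1, d))"
    using False unfolding step.simps by (simp only: if_False not_ex[symmetric] simp_thms)
  have "run (W((collen W d + 1, d) := Some y)) (NewBox (collen W d + 1, d)) U S"
    using run_inv[OF R _ st] by simp
  then show ?thesis using new False run_newbox_inv by blast
next
  case True
  define i where "i = (LEAST i. \<exists>e. W (i,d) = Some e \<and> y < e)"
  have ex: "\<exists>e. W (i,d) = Some e \<and> y < e" unfolding i_def using True by (rule LeastI_ex)
  then obtain w where w: "W (i,d) = Some w" "y < w" by blast
  have min: "\<forall>k<i. \<forall>e. W (k,d) = Some e \<longrightarrow> \<not> y < e"
    unfolding i_def using not_less_Least by blast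
  have st: "step (W, ColIns y d) = (W((i,d) := Some y), displace w (i,d))"
    using True w unfolding step.simps Let_def i_def[symmetric] by simp
  have "run (W((i,d) := Some y)) (displace w (i,d)) U S" using run_inv[OF R _ st] by simp
  then show ?thesis using bump w min st by blast
qed


lemma col_basic:
  assumes "run W s U S" "s = ColIns y d" "isB1 y" "is_young (dom W)"
  shows "(\<forall>i j. j < d \<longrightarrow> U (i,j) = W (i,j)) \<and> d \<le> snd S
    \<and> (\<forall>p. U p \<noteq> W p \<longrightarrow> (\<exists>e. U p = Some e \<and> isB1 e) \<and> (\<forall>a. W p = Some a \<longrightarrow> isB1 a))
    \<and> (\<forall>j. d \<le> j \<longrightarrow> j \<le> snd S \<longrightarrow> (\<exists>i e. U (i,j) = Some e \<and> isB1 e))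
    \<and> (\<forall>c. d \<le> c \<longrightarrow> snd S < c \<or> (\<exists>W' y'. run W' (ColIns y' c) U S \<and> isB1 y'))
    \<and> dom U = insert S (dom W) \<and> S \<notin> dom W"
  using assms
proof (induction arbitrary: y d rule: run.induct)
  case (run_new T p) then show ?case by simp
next
  case (run_step T s T' s' U S)
  have R: "run T (ColIns y d) U S" using run.run_step[OF run_step.hyps(1,2,3)] run_step.prems by simp
  have y: "is_young (dom T)" by fact
  show ?case
  using R proof (cases rule: col_run)
    case new
    have none: "T (collen T d + 1, d) = None" using collen_iff[OF y, of "collen T d + 1" d] by simp
    have e: "\<forall>c. d \<le> c \<longrightarrow> snd S < c \<or> (\<exists>W' y'. run W' (ColIns y' c) U S \<and> isB1 y')"
    proof (intro allI impI)
      fix c assume "d \<le> c"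
      show "snd S < c \<or> (\<exists>W' y'. run W' (ColIns y' c) U S \<and> isB1 y')"
      proof (cases "c = d")
        case True then show ?thesis using R run_step.prems by blast
      qed (use new \<open>d \<le> c\<close> in simp)
    qed
    have a: "\<forall>i' j. j < d \<longrightarrow> U (i',j) = T (i',j)" using new by auto
    have b: "d \<le> snd S" using new by simp
    have c: "\<forall>p. U p \<noteq> T p \<longrightarrow> (\<exists>e. U p = Some e \<and> isB1 e) \<and> (\<forall>a. T p = Some a \<longrightarrow> isB1 a)"
      using new none run_step.prems by auto
    have d: "\<forall>j. d \<le> j \<longrightarrow> j \<le> snd S \<longrightarrow> (\<exists>i e. U (i,j) = Some e \<and> isB1 e)"
      using new run_step.prems by auto
    have dm: "dom U = insert S (dom T) \<and> S \<notin> dom T" using new none by auto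
    show ?thesis using a b c d e dm by blast
  next
    case (bump i w)
    have wB1: "isB1 w" using less_B1 bump run_step.prems by blast
    have "(T', s') = (T((i,d) := Some y), ColIns w (Suc d))"
      using bump(5) run_step.hyps(1) run_step.prems(1) displace_B1[OF wB1] by metis
    then have st: "T' = T((i,d) := Some y)" "s' = ColIns w (Suc d)" by auto
    have domeq: "dom T' = dom T" using st bump(1) by auto
    have IH: "(\<forall>i j. j < Suc d \<longrightarrow> U (i,j) = T' (i,j)) \<and> Suc d \<le> snd S
    \<and> (\<forall>p. U p \<noteq> T' p \<longrightarrow> (\<exists>e. U p = Some e \<and> isB1 e) \<and> (\<forall>a. T' p = Some a \<longrightarrow> isB1 a))
    \<and> (\<forall>j. Suc d \<le> j \<longrightarrow> j \<le> snd S \<longrightarrow> (\<exists>i e. U (i,j) = Some e \<and> isB1 e))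
    \<and> (\<forall>c. Suc d \<le> c \<longrightarrow> snd S < c \<or> (\<exists>W' y'. run W' (ColIns y' c) U S \<and> isB1 y'))
    \<and> dom U = insert S (dom T') \<and> S \<notin> dom T'"
      using run_step.IH[OF st(2) wB1] domeq y by simp
    have a: "\<forall>i' j. j < d \<longrightarrow> U (i',j) = T (i',j)" using IH st by auto
    have Ud: "U (i,d) = Some y" using IH st by auto
    have c: "\<forall>p. U p \<noteq> T p \<longrightarrow> (\<exists>e. U p = Some e \<and> isB1 e) \<and> (\<forall>a. T p = Some a \<longrightarrow> isB1 a)"
    proof (intro allI impI)
      fix p assume ne: "U p \<noteq> T p"
      show "(\<exists>e. U p = Some e \<and> isB1 e) \<and> (\<forall>a. T p = Some a \<longrightarrow> isB1 a)"
      proof (cases "p = (i,d)")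
        case True then show ?thesis using Ud bump(1) wB1 run_step.prems by auto
      next
        case False
        then have "T' p = T p" using st by auto
        then show ?thesis using IH ne by metis
      qed
    qed
    have d: "\<forall>j. d \<le> j \<longrightarrow> j \<le> snd S \<longrightarrow> (\<exists>i e. U (i,j) = Some e \<and> isB1 e)"
    proof (intro allI impI)
      fix j assume "d \<le> j" "j \<le> snd S"
      show "\<exists>i e. U (i,j) = Some e \<and> isB1 e"
      proof (cases "j = d")
        case True then show ?thesis using Ud run_step.prems by blast
      next
        case False then show ?thesis using IH \<open>d \<le> j\<close> \<open>j \<le> snd S\<close> by auto
      qed
    qed
    have e: "\<forall>c. d \<le> c \<longrightarrow> snd S < c \<or> (\<exists>W' y'. run W' (ColIns y' c) U S \<and> isB1 y')"
    proof (intro allI impI)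
      fix c assume "d \<le> c"
      show "snd S < c \<or> (\<exists>W' y'. run W' (ColIns y' c) U S \<and> isB1 y')"
      proof (cases "c = d")
        case True then show ?thesis using R run_step.prems by blast
      next
        case False then show ?thesis using IH \<open>d \<le> c\<close> by auto
      qed
    qed
    show ?thesis using a IH c d e domeq by auto
  qed
qed


lemma row_basic:
  assumes "run W s U S" "s = RowIns z r" "isB0 z" "is_young (dom W)"
  shows "(\<forall>p. U p \<noteq> W p \<longrightarrow> ((\<exists>e. U p = Some e \<and> isB1 e) \<and> (\<forall>a. W p = Some a \<longrightarrow> isB1 a)) \<or> r \<le> fst p)
    \<and> dom U = insert S (dom W) \<and> S \<notin> dom W"
  using assms
proof (induction arbitrary: z r rule: run.induct)
  case (run_new T p) then show ?case by simp
next
  case (run_step T s T' s' U S)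
  have R: "run T (RowIns z r) U S" using run.run_step[OF run_step.hyps(1,2,3)] run_step.prems by simp
  have y: "is_young (dom T)" by fact
  show ?case
  using R proof (cases rule: row_run)
    case new
    have none: "T (r, rowlen T r + 1) = None" using rowlen_iff[OF y, of r "rowlen T r + 1"] by simp
    have a: "\<forall>p. U p \<noteq> T p \<longrightarrow> ((\<exists>e. U p = Some e \<and> isB1 e) \<and> (\<forall>a. T p = Some a \<longrightarrow> isB1 a)) \<or> r \<le> fst p"
      using new by auto
    have dm: "dom U = insert S (dom T) \<and> S \<notin> dom T" using new none by auto
    show ?thesis using a dm by blast
  next
    case (bump c w)
    have domeq: "dom (T((r,c) := Some z)) = dom T" using bump(1) by auto
    have "(T', s') = (T((r,c) := Some z), displace w (r,c))"
      using bump(5) run_step.hyps(1) run_step.prems(1) by metis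
    then have st: "T' = T((r,c) := Some z)" "s' = displace w (r,c)" by auto
    show ?thesis
    proof (cases "isB0 w")
      case True
      then have s': "s' = RowIns w (Suc r)" using st displace_B0 by simp
      have IH: "(\<forall>p. U p \<noteq> T' p \<longrightarrow> ((\<exists>e. U p = Some e \<and> isB1 e) \<and> (\<forall>a. T' p = Some a \<longrightarrow> isB1 a)) \<or> Suc r \<le> fst p)
         \<and> dom U = insert S (dom T') \<and> S \<notin> dom T'"
      proof -
        have y': "is_young (dom T')" using domeq st y by simp
        show ?thesis using run_step.IH[OF s' True y'] by blast
      qed
      have a: "\<forall>p. U p \<noteq> T p \<longrightarrow> ((\<exists>e. U p = Some e \<and> isB1 e) \<and> (\<forall>a. T p = Some a \<longrightarrow> isB1 a)) \<or> r \<le> fst p"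
      proof (intro allI impI)
        fix p assume ne: "U p \<noteq> T p"
        show "((\<exists>e. U p = Some e \<and> isB1 e) \<and> (\<forall>a. T p = Some a \<longrightarrow> isB1 a)) \<or> r \<le> fst p"
        proof (cases "p = (r,c)")
          case True then show ?thesis by simp
        next
          case False
          then have "T' p = T p" using st by auto
          then show ?thesis using IH ne by (metis Suc_leD)
        qed
      qed
      show ?thesis using a IH st domeq by simp
    next
      case False
      then have s': "s' = ColIns w (Suc c)" using st displace_B1 by simp
      have CB: "(\<forall>p. U p \<noteq> T' p \<longrightarrow> (\<exists>e. U p = Some e \<and> isB1 e) \<and> (\<forall>a. T' p = Some a \<longrightarrow> isB1 a))
         \<and> dom U = insert S (dom T') \<and> S \<notin> dom T'"
      proof -
        have y': "is_young (dom T')" using domeq st y by simp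
        show ?thesis using col_basic[OF run_step.hyps(3) s' False y'] by blast
      qed
      have a: "\<forall>p. U p \<noteq> T p \<longrightarrow> ((\<exists>e. U p = Some e \<and> isB1 e) \<and> (\<forall>a. T p = Some a \<longrightarrow> isB1 a)) \<or> r \<le> fst p"
      proof (intro allI impI)
        fix p assume ne: "U p \<noteq> T p"
        show "((\<exists>e. U p = Some e \<and> isB1 e) \<and> (\<forall>a. T p = Some a \<longrightarrow> isB1 a)) \<or> r \<le> fst p"
        proof (cases "p = (r,c)")
          case True then show ?thesis by simp
        next
          case False
          then have "T' p = T p" using st by auto
          then show ?thesis using CB ne by metis
        qed
      qed
      show ?thesis using a CB st domeq by simp
    qed
  qed
qed

definition RowInv :: "tab \<Rightarrow> entry \<Rightarrow> nat \<Rightarrow> nat \<Rightarrow> bool" where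
  "RowInv W z r \<beta> \<longleftrightarrow> tab_ok W \<and> isB0 z \<and> 1 \<le> r \<and>
     (1 < r \<longrightarrow> (r-1, \<beta>) \<in> dom W \<and> (\<forall>j a. j \<le> \<beta> \<longrightarrow> W (r-1, j) = Some a \<longrightarrow> a < z)
        \<and> (\<forall>a. W (r, \<beta>) = Some a \<longrightarrow> z < a))"

definition ColInv :: "tab \<Rightarrow> entry \<Rightarrow> nat \<Rightarrow> nat \<Rightarrow> bool" where
  "ColInv W y d \<rho> \<longleftrightarrow> tab_ok W \<and> isB1 y \<and> 2 \<le> d \<and> 1 \<le> \<rho> \<and> (\<rho>, d-1) \<in> dom W
     \<and> (\<forall>i a. i \<le> \<rho> \<longrightarrow> W (i, d-1) = Some a \<longrightarrow> a < y) \<and> (\<forall>a. W (\<rho>, d) = Some a \<longrightarrow> y < a)"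


lemma not_less_entry: "\<not> (z::entry) < a \<Longrightarrow> a \<le> z" by auto

lemma tab_rowI: "tab_ok W \<Longrightarrow> W (i,j) = Some a \<Longrightarrow> W (i, Suc j) = Some b \<Longrightarrow> a \<le> b \<and> (isB1 a \<longrightarrow> a < b)"
  unfolding tab_ok_def RowOrd_def by blast
lemma tab_colI: "tab_ok W \<Longrightarrow> W (i,j) = Some a \<Longrightarrow> W (Suc i, j) = Some b \<Longrightarrow> a \<le> b \<and> (isB0 a \<longrightarrow> a < b)"
  unfolding tab_ok_def ColOrd_def by blast

lemma row_bump_step:
  assumes inv: "RowInv W z r \<beta>" and Wc: "W (r,c) = Some w" and zw: "z < w"
    and min: "\<forall>j<c. \<forall>e. W (r,j) = Some e \<longrightarrow> \<not> z < e"
  shows "1 \<le> c \<and> (1 < r \<longrightarrow> c \<le> \<beta>) \<and> tab_ok (W((r,c) := Some z))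
    \<and> (isB0 w \<longrightarrow> RowInv (W((r,c) := Some z)) w (Suc r) c)
    \<and> (isB1 w \<longrightarrow> ColInv (W((r,c) := Some z)) w (Suc c) r)"
proof -
  have t: "tab_ok W" and zB0: "isB0 z" and r1: "1 \<le> r" using inv unfolding RowInv_def by auto
  have y: "is_young (dom W)" using t tab_young by blast
  have rc: "(r,c) \<in> dom W" using Wc by auto
  have c1: "1 \<le> c" using young_mem[OF y rc] by simp
  have cb: "c \<le> \<beta>" if "1 < r"
  proof (rule ccontr)
    assume "\<not> c \<le> \<beta>"
    have "(r-1, \<beta>) \<in> dom W" using inv that unfolding RowInv_def by blast
    then have "1 \<le> \<beta>" using young_mem[OF y] by blast
    then have "(r, \<beta>) \<in> dom W" using young_down[OF y rc, of r \<beta>] r1 \<open>\<not> c \<le> \<beta>\<close> by simp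
    then obtain a where a: "W (r,\<beta>) = Some a" by auto
    then have "z < a" using inv that unfolding RowInv_def by blast
    moreover have "\<beta> < c" using \<open>\<not> c \<le> \<beta>\<close> by simp
    ultimately show False using min a by blast
  qed
  define W' where "W' = W((r,c) := Some z)"
  have domeq: "dom W' = dom W" using rc W'_def by auto
  have ro: "RowOrd W'"
    unfolding RowOrd_def
  proof (intro allI impI)
    fix i j a b assume a: "W' (i,j) = Some a" and b: "W' (i, Suc j) = Some b"
    show "a \<le> b \<and> (isB1 a \<longrightarrow> a < b)"
    proof (cases "(i,j) = (r,c)")
      case True
      then have "a = z" "W (r, Suc c) = Some b" using a b W'_def by auto
      then have "w \<le> b" using tab_rowI[OF t Wc] by blast
      then show ?thesis using \<open>a = z\<close> zw zB0 by auto
    next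
      case False
      show ?thesis
      proof (cases "(i, Suc j) = (r,c)")
        case True
        then have "W (r,j) = Some a" "j < c" "b = z" using a b W'_def False by auto
        then have "a \<le> z" using min by (meson not_less_entry)
        moreover have "\<not> isB1 a" using \<open>a \<le> z\<close> zB0 le_B1 by blast
        ultimately show ?thesis using \<open>b = z\<close> by simp
      next
        case False
        then have "W (i,j) = Some a" "W (i, Suc j) = Some b" using a b W'_def \<open>(i,j) \<noteq> (r,c)\<close> by auto
        then show ?thesis using tab_rowI[OF t] by blast
      qed
    qed
  qed
  have co: "ColOrd W'"
    unfolding ColOrd_def
  proof (intro allI impI)
    fix i j a b assume a: "W' (i,j) = Some a" and b: "W' (Suc i, j) = Some b"
    show "a \<le> b \<and> (isB0 a \<longrightarrow> a < b)"
    proof (cases "(i,j) = (r,c)")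
      case True
      then have "a = z" "W (Suc r, c) = Some b" using a b W'_def by auto
      then have "w \<le> b" using tab_colI[OF t Wc] by blast
      then show ?thesis using \<open>a = z\<close> zw by auto
    next
      case False
      show ?thesis
      proof (cases "(Suc i, j) = (r,c)")
        case True
        then have a': "W (i,c) = Some a" "b = z" "j = c" "r = Suc i" using a b W'_def False by auto
        then have "(i,c) \<in> dom W" by auto
        then have "1 \<le> i" using young_mem[OF y] by blast
        then have "1 < r" using a' by simp
        then have "a < z" using inv cb a' unfolding RowInv_def by auto
        then show ?thesis using \<open>b = z\<close> by simp
      next
        case False
        then have "W (i,j) = Some a" "W (Suc i, j) = Some b" using a b W'_def \<open>(i,j) \<noteq> (r,c)\<close> by auto
        then show ?thesis using tab_colI[OF t] by blast
      qed
    qed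
  qed
  have t': "tab_ok W'" using ro co domeq y unfolding tab_ok_def by simp
  have ri: "RowInv W' w (Suc r) c" if "isB0 w"
  proof -
    have 1: "(Suc r - 1, c) \<in> dom W'" using domeq rc by simp
    have 2: "\<forall>j a. j \<le> c \<longrightarrow> W' (Suc r - 1, j) = Some a \<longrightarrow> a < w"
    proof (intro allI impI)
      fix j a assume "j \<le> c" "W' (Suc r - 1, j) = Some a"
      show "a < w"
      proof (cases "j = c")
        case True then show ?thesis using \<open>W' (Suc r - 1, j) = Some a\<close> W'_def zw by simp
      next
        case False
        then have "W (r,j) = Some a" "j < c" using \<open>W' (Suc r - 1, j) = Some a\<close> W'_def \<open>j \<le> c\<close> by auto
        then have "a \<le> z" using min by (meson not_less_entry)
        then show ?thesis using zw by simp
      qed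
    qed
    have 3: "\<forall>a. W' (Suc r, c) = Some a \<longrightarrow> w < a"
      using tab_colI[OF t Wc] that W'_def by auto
    show ?thesis unfolding RowInv_def using t' that 1 2 3 by simp
  qed
  have ci: "ColInv W' w (Suc c) r" if "isB1 w"
  proof -
    have 1: "\<forall>i a. i \<le> r \<longrightarrow> W' (i, Suc c - 1) = Some a \<longrightarrow> a < w"
    proof (intro allI impI)
      fix i a assume "i \<le> r" "W' (i, Suc c - 1) = Some a"
      then have "a \<le> z" using col_trans'[OF t', of i c a r z] W'_def by simp
      then show "a < w" using zw by simp
    qed
    have 2: "\<forall>a. W' (r, Suc c) = Some a \<longrightarrow> w < a"
      using tab_rowI[OF t Wc] that W'_def by auto
    show ?thesis unfolding ColInv_def using t' that 1 2 c1 r1 domeq rc by simp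
  qed
  show ?thesis using c1 cb t' ri ci W'_def by blast
qed


lemma row_new_step:
  assumes inv: "RowInv W z r \<beta>" and noE: "\<not>(\<exists>c e. W (r,c) = Some e \<and> z < e)"
  shows "tab_ok (W((r, rowlen W r + 1) := Some z)) \<and> (1 < r \<longrightarrow> rowlen W r + 1 \<le> \<beta>)"
proof -
  have t: "tab_ok W" and zB0: "isB0 z" and r1: "1 \<le> r" using inv unfolding RowInv_def by auto
  have y: "is_young (dom W)" using t tab_young by blast
  define L where "L = rowlen W r"
  have none: "W (r, L+1) = None" using rowlen_iff[OF y, of r "L+1"] L_def by simp
  have none2: "W (r, Suc (L+1)) = None" using rowlen_iff[OF y, of r "Suc (L+1)"] L_def by simp
  have Lb: "L + 1 \<le> \<beta>" if "1 < r"
  proof -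
    have "(r-1, \<beta>) \<in> dom W" using inv that unfolding RowInv_def by blast
    then have "1 \<le> \<beta>" using young_mem[OF y] by blast
    have "W (r, \<beta>) = None"
    proof (rule ccontr)
      assume "W (r, \<beta>) \<noteq> None"
      then obtain a where "W (r,\<beta>) = Some a" by auto
      moreover then have "z < a" using inv that unfolding RowInv_def by blast
      ultimately show False using noE by blast
    qed
    then show ?thesis using rowlen_iff[OF y, of r \<beta>] \<open>1 \<le> \<beta>\<close> L_def by simp
  qed
  define W' where "W' = W((r, L+1) := Some z)"
  have yi: "is_young (dom W')"
  proof -
    have up: "r = 1 \<or> (r-1, L+1) \<in> dom W"
    proof (cases "r = 1")
      case False
      then have "1 < r" using r1 by simp
      have "(r-1, \<beta>) \<in> dom W" using inv \<open>1 < r\<close> unfolding RowInv_def by blast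
      then show ?thesis using young_down[OF y, of "r-1" \<beta> "r-1" "L+1"] Lb[OF \<open>1 < r\<close>] \<open>1 < r\<close> by simp
    qed simp
    have lf: "L + 1 = 1 \<or> (r, L+1-1) \<in> dom W"
      using rowlen_iff[OF y, of r L] L_def by auto
    have "dom W' = insert (r, L+1) (dom W)" using W'_def by auto
    then show ?thesis using young_insert[OF y r1 _ up lf] by simp
  qed
  have ro: "RowOrd W'"
    unfolding RowOrd_def
  proof (intro allI impI)
    fix i j a b assume a: "W' (i,j) = Some a" and b: "W' (i, Suc j) = Some b"
    show "a \<le> b \<and> (isB1 a \<longrightarrow> a < b)"
    proof (cases "(i,j) = (r,L+1)")
      case True
      then show ?thesis using b none2 W'_def by auto
    next
      case False
      show ?thesis
      proof (cases "(i, Suc j) = (r,L+1)")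
        case True
        then have "W (r,j) = Some a" "b = z" using a b W'_def False by auto
        then have "a \<le> z" using noE by (meson not_less_entry)
        moreover have "\<not> isB1 a" using \<open>a \<le> z\<close> zB0 le_B1 by blast
        ultimately show ?thesis using \<open>b = z\<close> by simp
      next
        case False
        then have "W (i,j) = Some a" "W (i, Suc j) = Some b" using a b W'_def \<open>(i,j) \<noteq> (r,L+1)\<close> by auto
        then show ?thesis using tab_rowI[OF t] by blast
      qed
    qed
  qed
  have co: "ColOrd W'"
    unfolding ColOrd_def
  proof (intro allI impI)
    fix i j a b assume a: "W' (i,j) = Some a" and b: "W' (Suc i, j) = Some b"
    show "a \<le> b \<and> (isB0 a \<longrightarrow> a < b)"
    proof (cases "(i,j) = (r,L+1)")
      case True
      then have "W (Suc r, L+1) = Some b" using b W'_def by auto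
      then have "(Suc r, L+1) \<in> dom W" by auto
      then have "(r, L+1) \<in> dom W" using young_down[OF y, of "Suc r" "L+1" r "L+1"] r1 by simp
      then show ?thesis using none by auto
    next
      case False
      show ?thesis
      proof (cases "(Suc i, j) = (r,L+1)")
        case True
        then have a': "W (i,L+1) = Some a" "b = z" "j = L+1" "r = Suc i" using a b W'_def False by auto
        then have "(i,L+1) \<in> dom W" by auto
        then have "1 \<le> i" using young_mem[OF y] by blast
        then have "1 < r" using a' by simp
        then have "a < z" using inv Lb a' unfolding RowInv_def by auto
        then show ?thesis using \<open>b = z\<close> by simp
      next
        case False
        then have "W (i,j) = Some a" "W (Suc i, j) = Some b" using a b W'_def \<open>(i,j) \<noteq> (r,L+1)\<close> by auto
        then show ?thesis using tab_colI[OF t] by blast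
      qed
    qed
  qed
  show ?thesis using yi ro co Lb unfolding tab_ok_def W'_def L_def by simp
qed

lemma col_bump_step:
  assumes inv: "ColInv W y d \<rho>" and Wc: "W (i,d) = Some w" and yw: "y < w"
    and min: "\<forall>k<i. \<forall>e. W (k,d) = Some e \<longrightarrow> \<not> y < e"
  shows "i \<le> \<rho> \<and> 1 \<le> i \<and> tab_ok (W((i,d) := Some y)) \<and> ColInv (W((i,d) := Some y)) w (Suc d) i"
proof -
  have t: "tab_ok W" and yB1: "isB1 y" and d2: "2 \<le> d" and r1: "1 \<le> \<rho>" and rd: "(\<rho>, d-1) \<in> dom W"
    and left: "\<forall>i a. i \<le> \<rho> \<longrightarrow> W (i, d-1) = Some a \<longrightarrow> a < y"
    and rgt: "\<forall>a. W (\<rho>, d) = Some a \<longrightarrow> y < a" using inv unfolding ColInv_def by auto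
  have yg: "is_young (dom W)" using t tab_young by blast
  have ic: "(i,d) \<in> dom W" using Wc by auto
  have i1: "1 \<le> i" using young_mem[OF yg ic] by simp
  have ib: "i \<le> \<rho>"
  proof (rule ccontr)
    assume "\<not> i \<le> \<rho>"
    then have "(\<rho>, d) \<in> dom W" using young_down[OF yg ic, of \<rho> d] r1 d2 by simp
    then obtain a where a: "W (\<rho>,d) = Some a" by auto
    then have "y < a" using rgt by blast
    moreover have "\<rho> < i" using \<open>\<not> i \<le> \<rho>\<close> by simp
    ultimately show False using min a by blast
  qed
  define W' where "W' = W((i,d) := Some y)"
  have domeq: "dom W' = dom W" using ic W'_def by auto
  have ro: "RowOrd W'"
    unfolding RowOrd_def
  proof (intro allI impI)
    fix k j a b assume a: "W' (k,j) = Some a" and b: "W' (k, Suc j) = Some b"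
    show "a \<le> b \<and> (isB1 a \<longrightarrow> a < b)"
    proof (cases "(k,j) = (i,d)")
      case True
      then have "a = y" "W (i, Suc d) = Some b" using a b W'_def by auto
      then have "w \<le> b" using tab_rowI[OF t Wc] by blast
      then show ?thesis using \<open>a = y\<close> yw by auto
    next
      case False
      show ?thesis
      proof (cases "(k, Suc j) = (i,d)")
        case True
        then have "W (i,d-1) = Some a" "b = y" using a b W'_def False by auto
        then have "a < y" using left ib by blast
        then show ?thesis using \<open>b = y\<close> by simp
      next
        case False
        then have "W (k,j) = Some a" "W (k, Suc j) = Some b" using a b W'_def \<open>(k,j) \<noteq> (i,d)\<close> by auto
        then show ?thesis using tab_rowI[OF t] by blast
      qed
    qed
  qed
  have co: "ColOrd W'"
    unfolding ColOrd_def
  proof (intro allI impI)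
    fix k j a b assume a: "W' (k,j) = Some a" and b: "W' (Suc k, j) = Some b"
    show "a \<le> b \<and> (isB0 a \<longrightarrow> a < b)"
    proof (cases "(k,j) = (i,d)")
      case True
      then have "a = y" "W (Suc i, d) = Some b" using a b W'_def by auto
      then have "w \<le> b" using tab_colI[OF t Wc] by blast
      then show ?thesis using \<open>a = y\<close> yw by auto
    next
      case False
      show ?thesis
      proof (cases "(Suc k, j) = (i,d)")
        case True
        then have a': "W (k,d) = Some a" "b = y" "k < i" using a b W'_def False by auto
        then have "a \<le> y" using min by (meson not_less_entry)
        moreover have "isB0 a \<longrightarrow> a < y" using B0_less_B1 yB1 by blast
        ultimately show ?thesis using \<open>b = y\<close> by simp
      next
        case False
        then have "W (k,j) = Some a" "W (Suc k, j) = Some b" using a b W'_def \<open>(k,j) \<noteq> (i,d)\<close> by auto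
        then show ?thesis using tab_colI[OF t] by blast
      qed
    qed
  qed
  have t': "tab_ok W'" using ro co domeq yg unfolding tab_ok_def by simp
  have wB1: "isB1 w" using less_B1 yw yB1 by blast
  have 1: "\<forall>k a. k \<le> i \<longrightarrow> W' (k, Suc d - 1) = Some a \<longrightarrow> a < w"
  proof (intro allI impI)
    fix k a assume "k \<le> i" "W' (k, Suc d - 1) = Some a"
    then have "a \<le> y" using col_trans'[OF t', of k d a i y] W'_def by simp
    then show "a < w" using yw by simp
  qed
  have 2: "\<forall>a. W' (i, Suc d) = Some a \<longrightarrow> w < a"
    using tab_rowI[OF t Wc] wB1 W'_def by auto
  have ci: "ColInv W' w (Suc d) i" unfolding ColInv_def using t' wB1 1 2 i1 d2 domeq ic by simp
  show ?thesis using ib i1 t' ci W'_def by blast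
qed

lemma col_new_step:
  assumes inv: "ColInv W y d \<rho>" and noE: "\<not>(\<exists>i e. W (i,d) = Some e \<and> y < e)"
  shows "tab_ok (W((collen W d + 1, d) := Some y))"
proof -
  have t: "tab_ok W" and yB1: "isB1 y" and d2: "2 \<le> d" and r1: "1 \<le> \<rho>" and rd: "(\<rho>, d-1) \<in> dom W"
    and left: "\<forall>i a. i \<le> \<rho> \<longrightarrow> W (i, d-1) = Some a \<longrightarrow> a < y"
    and rgt: "\<forall>a. W (\<rho>, d) = Some a \<longrightarrow> y < a" using inv unfolding ColInv_def by auto
  have yg: "is_young (dom W)" using t tab_young by blast
  define L where "L = collen W d"
  have none: "W (L+1, d) = None" using collen_iff[OF yg, of "L+1" d] L_def by simp
  have none2: "W (Suc (L+1), d) = None" using collen_iff[OF yg, of "Suc (L+1)" d] L_def by simp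
  have "W (\<rho>, d) = None"
  proof (rule ccontr)
    assume "W (\<rho>, d) \<noteq> None"
    then obtain a where "W (\<rho>,d) = Some a" by auto
    then show False using rgt noE by blast
  qed
  then have Lr: "L + 1 \<le> \<rho>" using collen_iff[OF yg, of \<rho> d] r1 L_def by simp
  define W' where "W' = W((L+1, d) := Some y)"
  have yi: "is_young (dom W')"
  proof -
    have up: "L+1 = 1 \<or> (L+1-1, d) \<in> dom W"
      using collen_iff[OF yg, of L d] L_def by auto
    have lf: "d = 1 \<or> (L+1, d-1) \<in> dom W"
      using young_down[OF yg rd, of "L+1" "d-1"] Lr d2 by simp
    have "dom W' = insert (L+1, d) (dom W)" using W'_def by auto
    then show ?thesis using young_insert[OF yg _ _ up lf] d2 by simp
  qed
  have ro: "RowOrd W'"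
    unfolding RowOrd_def
  proof (intro allI impI)
    fix i j a b assume a: "W' (i,j) = Some a" and b: "W' (i, Suc j) = Some b"
    show "a \<le> b \<and> (isB1 a \<longrightarrow> a < b)"
    proof (cases "(i,j) = (L+1,d)")
      case True
      then have "W (L+1, Suc d) = Some b" using b W'_def by auto
      then have "(L+1, Suc d) \<in> dom W" by auto
      then have "(L+1, d) \<in> dom W" using young_down[OF yg, of "L+1" "Suc d" "L+1" d] d2 by simp
      then show ?thesis using none by auto
    next
      case False
      show ?thesis
      proof (cases "(i, Suc j) = (L+1,d)")
        case True
        then have "W (L+1,d-1) = Some a" "b = y" using a b W'_def False by auto
        then have "a < y" using left Lr by blast
        then show ?thesis using \<open>b = y\<close> by simp
      next
        case False
        then have "W (i,j) = Some a" "W (i, Suc j) = Some b" using a b W'_def \<open>(i,j) \<noteq> (L+1,d)\<close> by auto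
        then show ?thesis using tab_rowI[OF t] by blast
      qed
    qed
  qed
  have co: "ColOrd W'"
    unfolding ColOrd_def
  proof (intro allI impI)
    fix i j a b assume a: "W' (i,j) = Some a" and b: "W' (Suc i, j) = Some b"
    show "a \<le> b \<and> (isB0 a \<longrightarrow> a < b)"
    proof (cases "(i,j) = (L+1,d)")
      case True
      then show ?thesis using b none2 W'_def by auto
    next
      case False
      show ?thesis
      proof (cases "(Suc i, j) = (L+1,d)")
        case True
        then have a': "W (i,d) = Some a" "b = y" using a b W'_def False by auto
        then have "a \<le> y" using noE by (meson not_less_entry)
        moreover have "isB0 a \<longrightarrow> a < y" using B0_less_B1 yB1 by blast
        ultimately show ?thesis using \<open>b = y\<close> by simp
      next
        case False
        then have "W (i,j) = Some a" "W (Suc i, j) = Some b" using a b W'_def \<open>(i,j) \<noteq> (L+1,d)\<close> by auto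
        then show ?thesis using tab_colI[OF t] by blast
      qed
    qed
  qed
  show ?thesis using yi ro co unfolding tab_ok_def W'_def L_def by simp
qed


lemma col_path:
  assumes "run W s U S" "s = ColIns y d" "ColInv W y d \<rho>"
  shows "tab_ok U"
  using assms
proof (induction arbitrary: y d \<rho> rule: run.induct)
  case (run_new T p) then show ?case by simp
next
  case (run_step T s T' s' U S)
  have R: "run T (ColIns y d) U S" using run.run_step[OF run_step.hyps(1,2,3)] run_step.prems by simp
  show ?case
  using R proof (cases rule: col_run)
    case new
    then show ?thesis using col_new_step[OF run_step.prems(2)] by metis
  next
    case (bump i w)
    have B: "i \<le> \<rho> \<and> 1 \<le> i \<and> tab_ok (T((i,d) := Some y)) \<and> ColInv (T((i,d) := Some y)) w (Suc d) i"
      using col_bump_step[OF run_step.prems(2) bump(1,2,3)] .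
    have wB1: "isB1 w" using B unfolding ColInv_def by simp
    have "(T', s') = (T((i,d) := Some y), ColIns w (Suc d))"
      using bump(5) run_step.hyps(1) run_step.prems(1) displace_B1[OF wB1] by metis
    then have st: "T' = T((i,d) := Some y)" "s' = ColIns w (Suc d)" by auto
    show ?thesis using run_step.IH[OF st(2)] B st by blast
  qed
qed

lemma row_path:
  assumes "run W s U S" "s = RowIns z r" "RowInv W z r \<beta>"
  shows "tab_ok U \<and> (1 < r \<longrightarrow> (\<forall>j. \<beta> < j \<longrightarrow> j \<le> snd S \<longrightarrow> (\<exists>i e. U (i,j) = Some e \<and> isB1 e))
     \<and> (\<forall>c. \<beta> < c \<longrightarrow> snd S < c \<or> (\<exists>W' y'. run W' (ColIns y' c) U S \<and> isB1 y')))"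
  using assms
proof (induction arbitrary: z r \<beta> rule: run.induct)
  case (run_new T p) then show ?case by simp
next
  case (run_step T s T' s' U S)
  have R: "run T (RowIns z r) U S" using run.run_step[OF run_step.hyps(1,2,3)] run_step.prems by simp
  show ?case
  using R proof (cases rule: row_run)
    case new
    have N: "tab_ok (T((r, rowlen T r + 1) := Some z)) \<and> (1 < r \<longrightarrow> rowlen T r + 1 \<le> \<beta>)"
      using row_new_step[OF run_step.prems(2) new(1)] .
    have tU: "tab_ok U" using N new by metis
    have sS: "1 < r \<longrightarrow> snd S \<le> \<beta>" using N new by simp
    show ?thesis using tU sS by auto
  next
    case (bump c w)
    have B: "1 \<le> c \<and> (1 < r \<longrightarrow> c \<le> \<beta>) \<and> tab_ok (T((r,c) := Some z))
      \<and> (isB0 w \<longrightarrow> RowInv (T((r,c) := Some z)) w (Suc r) c)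
      \<and> (isB1 w \<longrightarrow> ColInv (T((r,c) := Some z)) w (Suc c) r)"
      using row_bump_step[OF run_step.prems(2) bump(1,2,3)] .
    have "(T', s') = (T((r,c) := Some z), displace w (r,c))"
      using bump(5) run_step.hyps(1) run_step.prems(1) by metis
    then have st: "T' = T((r,c) := Some z)" "s' = displace w (r,c)" by auto
    show ?thesis
    proof (cases "isB0 w")
      case True
      then have s': "s' = RowIns w (Suc r)" using st displace_B0 by simp
      have IH: "tab_ok U \<and> (\<forall>j. c < j \<longrightarrow> j \<le> snd S \<longrightarrow> (\<exists>i e. U (i,j) = Some e \<and> isB1 e))
         \<and> (\<forall>c'. c < c' \<longrightarrow> snd S < c' \<or> (\<exists>W' y'. run W' (ColIns y' c') U S \<and> isB1 y'))"
      proof -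
        have ri: "RowInv T' w (Suc r) c" using B True st by metis
        have "1 \<le> r" using run_step.prems(2) unfolding RowInv_def by simp
        then show ?thesis using run_step.IH[OF s' ri] by simp
      qed
      show ?thesis
      proof (intro conjI impI allI)
        show "tab_ok U" using IH by simp
      next
        fix j assume "1 < r" "\<beta> < j" "j \<le> snd S"
        then show "\<exists>i e. U (i,j) = Some e \<and> isB1 e" using IH B by auto
      next
        fix c' assume "1 < r" "\<beta> < c'"
        then show "snd S < c' \<or> (\<exists>W' y'. run W' (ColIns y' c') U S \<and> isB1 y')" using IH B by auto
      qed
    next
      case False
      then have s': "s' = ColIns w (Suc c)" using st displace_B1 by simp
      have ci: "ColInv T' w (Suc c) r" using B False st by simp
      have tU: "tab_ok U" using col_path[OF run_step.hyps(3) s' ci] .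
      have yg: "is_young (dom T')" using ci unfolding ColInv_def tab_ok_def by simp
      have CB: "(\<forall>j. Suc c \<le> j \<longrightarrow> j \<le> snd S \<longrightarrow> (\<exists>i e. U (i,j) = Some e \<and> isB1 e))
         \<and> (\<forall>c'. Suc c \<le> c' \<longrightarrow> snd S < c' \<or> (\<exists>W' y'. run W' (ColIns y' c') U S \<and> isB1 y'))"
        using col_basic[OF run_step.hyps(3) s' False yg] by blast
      show ?thesis
      proof (intro conjI impI allI)
        show "tab_ok U" using tU .
      next
        fix j assume "1 < r" "\<beta> < j" "j \<le> snd S"
        then show "\<exists>i e. U (i,j) = Some e \<and> isB1 e" using CB B by auto
      next
        fix c' assume "1 < r" "\<beta> < c'"
        then show "snd S < c' \<or> (\<exists>W' y'. run W' (ColIns y' c') U S \<and> isB1 y')" using CB B by auto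
      qed
    qed
  qed
qed


lemma col_simple:
  assumes "run W s U S" "s = ColIns y d" "isB1 y"
  shows "(\<forall>i j. j < d \<longrightarrow> U (i,j) = W (i,j)) \<and> d \<le> snd S"
  using assms
proof (induction arbitrary: y d rule: run.induct)
  case (run_new T p) then show ?case by simp
next
  case (run_step T s T' s' U S)
  have R: "run T (ColIns y d) U S" using run.run_step[OF run_step.hyps(1,2,3)] run_step.prems by simp
  show ?case
  using R proof (cases rule: col_run)
    case new then show ?thesis by simp
  next
    case (bump i w)
    have wB1: "isB1 w" using less_B1 bump run_step.prems by blast
    have "(T', s') = (T((i,d) := Some y), ColIns w (Suc d))"
      using bump(5) run_step.hyps(1) run_step.prems(1) displace_B1[OF wB1] by metis
    then have st: "T' = T((i,d) := Some y)" "s' = ColIns w (Suc d)" by auto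
    have IH: "(\<forall>i j. j < Suc d \<longrightarrow> U (i,j) = T' (i,j)) \<and> Suc d \<le> snd S"
      using run_step.IH[OF st(2) wB1] .
    then show ?thesis using st by auto
  qed
qed

definition Agree :: "tab \<Rightarrow> tab \<Rightarrow> nat \<Rightarrow> bool" where
  "Agree W U d \<longleftrightarrow> (\<forall>i j e. d \<le> j \<longrightarrow> isB1 e \<longrightarrow> (W (i,j) = Some e \<longleftrightarrow> U (i,j) = Some e))"

lemma col_compare:
  assumes "run W1 s U S1" "s = ColIns y d" "isB1 y"
    "run W2 (ColIns y' d) V S2" "isB1 y'" "y' < y" "Agree W2 U d"
  shows "snd S1 < snd S2"
  using assms
proof (induction arbitrary: y d y' W2 rule: run.induct)
  case (run_new T p) then show ?case by simp
next
  case (run_step T s T' s' U S1)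
  have R: "run T (ColIns y d) U S1" using run.run_step[OF run_step.hyps(1,2,3)] run_step.prems by simp
  have R2: "run W2 (ColIns y' d) V S2" by fact
  show ?case
  using R proof (cases rule: col_run)
    case new
    have "U (collen T d + 1, d) = Some y" using new by simp
    then have W2p: "W2 (collen T d + 1, d) = Some y" using run_step.prems(2,6) unfolding Agree_def by blast
    show ?thesis
    using R2 proof (cases rule: col_run)
      case new
      then show ?thesis using W2p run_step.prems(5) by blast
    next
      case (bump i' w')
      have wB1: "isB1 w'" using less_B1 bump run_step.prems by blast
      have "Suc d \<le> snd S2" using col_simple[OF bump(4) displace_B1[OF wB1] wB1] by simp
      then show ?thesis using new by simp
    qed
  next
    case (bump i w)
    have wB1: "isB1 w" using less_B1 bump run_step.prems by blast
    have "(T', s') = (T((i,d) := Some y), ColIns w (Suc d))"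
      using bump(5) run_step.hyps(1) run_step.prems(1) displace_B1[OF wB1] by metis
    then have st: "T' = T((i,d) := Some y)" "s' = ColIns w (Suc d)" by auto
    have Ucol: "\<forall>k. U (k,d) = T' (k,d)" using col_simple[OF run_step.hyps(3) st(2) wB1] by simp
    have Ui: "U (i,d) = Some y" using Ucol st by simp
    then have W2i: "W2 (i,d) = Some y" using run_step.prems(2,6) unfolding Agree_def by blast
    show ?thesis
    using R2 proof (cases rule: col_run)
      case new
      then show ?thesis using W2i run_step.prems(5) by blast
    next
      case (bump i' w')
      have w'B1: "isB1 w'" using less_B1 bump run_step.prems by blast
      have ii: "i' \<le> i"
      proof (rule ccontr)
        assume "\<not> i' \<le> i"
        then have "i < i'" by simp
        then show False using bump(3) W2i run_step.prems(5) by blast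
      qed
      have Ui': "U (i',d) = Some w'" using bump(1) w'B1 run_step.prems(6) unfolding Agree_def by blast
      have ww: "w' < w"
      proof (cases "i' = i")
        case True then show ?thesis using Ui Ui' \<open>y < w\<close> by simp
      next
        case False
        then have "i' < i" using ii by simp
        have "T (i',d) = Some w'" using Ucol Ui' st False by simp
        then have "\<not> y < w'" using \<open>\<forall>k<i. \<forall>e. T (k,d) = Some e \<longrightarrow> \<not> y < e\<close> \<open>i' < i\<close> by blast
        then show ?thesis using \<open>y < w\<close> by simp
      qed
      have ag: "Agree (W2((i',d) := Some y')) U (Suc d)"
        using run_step.prems(6) unfolding Agree_def by auto
      have r2: "run (W2((i',d) := Some y')) (ColIns w' (Suc d)) V S2"
        using bump(4) displace_B1[OF w'B1] by simp
      show ?thesis using run_step.IH[OF st(2) wB1 r2 w'B1 ww ag] .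
    qed
  qed
qed

lemma col_start:
  assumes R1: "run W1 (ColIns y c) U S1" and yB: "isB1 y"
    and R2: "run W2 (ColIns y' (Suc c)) V S2" and y'B: "isB1 y'"
    and Uk: "U (k,c) = Some y'" and H: "\<forall>i<k. \<forall>e. U (i,c) = Some e \<longrightarrow> isB0 e"
    and ag: "Agree W2 U (Suc c)"
  shows "snd S1 < snd S2"
  using R1
proof (cases rule: col_run)
  case new
  have "Suc c \<le> snd S2" using col_simple[OF R2 refl y'B] by simp
  then show ?thesis using new by simp
next
  case (bump i w)
  have wB1: "isB1 w" using less_B1 bump yB by blast
  have tail: "run (W1((i,c) := Some y)) (ColIns w (Suc c)) U S1"
    using bump(4) displace_B1[OF wB1] by simp
  have Ucol: "\<forall>k. U (k,c) = (W1((i,c) := Some y)) (k,c)" using col_simple[OF tail refl wB1] by simp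
  have Ui: "U (i,c) = Some y" using Ucol by simp
  have ki: "k \<le> i"
  proof (rule ccontr)
    assume "\<not> k \<le> i"
    then have "i < k" by simp
    then show False using H Ui yB by blast
  qed
  have yw: "y' < w"
  proof (cases "k = i")
    case True then show ?thesis using Ui Uk \<open>y < w\<close> by simp
  next
    case False
    then have "k < i" using ki by simp
    have "W1 (k,c) = Some y'" using Ucol Uk False by simp
    then have "\<not> y < y'" using bump(3) \<open>k < i\<close> by blast
    then show ?thesis using \<open>y < w\<close> by simp
  qed
  show ?thesis using col_compare[OF tail refl wB1 R2 y'B yw ag] .
qed


lemma lockstep:
  assumes "run W2 s2 V S2" "s2 = RowIns z' r"
    and "run W1 (RowIns z r) U S1" "RowInv W1 z r \<beta>1" "tab_ok U" "isB0 z'" "z \<le> z'"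
    and "\<forall>i j. r \<le> i \<longrightarrow> W2 (i,j) = U (i,j)"
    and "\<forall>p. W2 p \<noteq> U p \<longrightarrow> (\<exists>a. W2 p = Some a \<and> isB0 a) \<and> (\<exists>b. U p = Some b \<and> isB0 b)"
    and "1 < r \<longrightarrow> 1 \<le> \<beta>2 \<and> (\<forall>a. U (r,\<beta>2) = Some a \<longrightarrow> z' < a) \<and> (\<forall>i<r. \<forall>j\<le>\<beta>2. \<forall>e. U (i,j) = Some e \<longrightarrow> isB0 e)"
  shows "snd S1 < snd S2"
  using assms
proof (induction arbitrary: z' r W1 z \<beta>1 \<beta>2 rule: run.induct)
  case (run_new T p) then show ?case by simp
next
  case (run_step T s T' s' V S2)
  note P = run_step.prems
  have R2: "run T (RowIns z' r) V S2" using run.run_step[OF run_step.hyps(1,2,3)] P by simp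
  have R1: "run W1 (RowIns z r) U S1" by fact
  have tU: "tab_ok U" by fact
  have yU: "is_young (dom U)" using tU tab_young by blast
  have t1: "tab_ok W1" and zB0: "isB0 z" and r1: "1 \<le> r" using P(3) unfolding RowInv_def by auto
  have rowr: "\<forall>j. T (r,j) = U (r,j)" using P(7) by simp
  have rl: "rowlen T r = rowlen U r" using rowr unfolding rowlen_def by simp
  have z'B: "isB0 z'" and zz: "z \<le> z'" by fact+
  show ?case
  using R1 proof (cases rule: row_run)
    case new
    have noE2: "\<not>(\<exists>c e. T (r,c) = Some e \<and> z' < e)"
    proof
      assume "\<exists>c e. T (r,c) = Some e \<and> z' < e"
      then obtain c e where ce: "U (r,c) = Some e" "z' < e" using rowr by metis
      show False
      proof (cases "c = rowlen W1 r + 1")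
        case True then show False using ce new zz by simp
      next
        case False
        then have "W1 (r,c) = Some e" using ce new by simp
        then have "e \<le> z" using new(1) by (meson not_less_entry)
        then show False using ce zz by simp
      qed
    qed
    have "(r, rowlen W1 r + 1) \<in> dom U" using new by simp
    then have le: "rowlen W1 r + 1 \<le> rowlen U r" using rowlen_iff[OF yU, of r "rowlen W1 r + 1"] by auto
    show ?thesis
    using R2 proof (cases rule: row_run)
      case new
      then show ?thesis using \<open>S1 = (r, rowlen W1 r + 1)\<close> le rl by simp
    next
      case (bump c' w')
      then show ?thesis using noE2 by blast
    qed
  next
    case (bump c w)
    note b1 = bump
    define W1' where "W1' = W1((r,c) := Some z)"
    have B: "1 \<le> c \<and> (1 < r \<longrightarrow> c \<le> \<beta>1) \<and> tab_ok W1'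
      \<and> (isB0 w \<longrightarrow> RowInv W1' w (Suc r) c)
      \<and> (isB1 w \<longrightarrow> ColInv W1' w (Suc c) r)"
      using row_bump_step[OF P(3) bump(1,2,3)] unfolding W1'_def .
    have y1': "is_young (dom W1')" using B tab_young by blast
    have tail1: "run W1' (displace w (r,c)) U S1" using bump(4) W1'_def by simp
    have chg: "\<forall>p. U p \<noteq> W1' p \<longrightarrow> ((\<exists>e. U p = Some e \<and> isB1 e) \<and> (\<forall>a. W1' p = Some a \<longrightarrow> isB1 a)) \<or> Suc r \<le> fst p"
    proof (cases "isB0 w")
      case True
      have "(\<forall>p. U p \<noteq> W1' p \<longrightarrow> ((\<exists>e. U p = Some e \<and> isB1 e) \<and> (\<forall>a. W1' p = Some a \<longrightarrow> isB1 a)) \<or> Suc r \<le> fst p)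
         \<and> dom U = insert S1 (dom W1') \<and> S1 \<notin> dom W1'"
        using row_basic[OF tail1 displace_B0[OF True] True y1'] .
      then show ?thesis by blast
    next
      case False
      have "(\<forall>p. U p \<noteq> W1' p \<longrightarrow> (\<exists>e. U p = Some e \<and> isB1 e) \<and> (\<forall>a. W1' p = Some a \<longrightarrow> isB1 a))"
        using col_basic[OF tail1 displace_B1[OF False] False y1'] by blast
      then show ?thesis by blast
    qed
    have Urc: "U (r,c) = Some z"
    proof (rule ccontr)
      assume "U (r,c) \<noteq> Some z"
      then have "U (r,c) \<noteq> W1' (r,c)" using W1'_def by simp
      then show False using chg zB0 W1'_def by fastforce
    qed
    have Urow_le: "e \<le> z" if "j \<le> c" "U (r,j) = Some e" for j e
      using row_trans'[OF tU that(2) Urc that(1)] .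
    have UB0_unch: "W1' (r,j) = Some e" if "U (r,j) = Some e" "isB0 e" for j e
    proof (rule ccontr)
      assume "W1' (r,j) \<noteq> Some e"
      then have "U (r,j) \<noteq> W1' (r,j)" using that by simp
      then show False using chg that by fastforce
    qed
    have B1col: "\<forall>j. c < j \<longrightarrow> j \<le> snd S1 \<longrightarrow> (\<exists>i e. U (i,j) = Some e \<and> isB1 e)"
     and reach: "\<forall>c''. c < c'' \<longrightarrow> snd S1 < c'' \<or> (\<exists>W' y'. run W' (ColIns y' c'') U S1 \<and> isB1 y')"
    proof -
      have "(\<forall>j. c < j \<longrightarrow> j \<le> snd S1 \<longrightarrow> (\<exists>i e. U (i,j) = Some e \<and> isB1 e))
         \<and> (\<forall>c''. c < c'' \<longrightarrow> snd S1 < c'' \<or> (\<exists>W' y'. run W' (ColIns y' c'') U S1 \<and> isB1 y'))"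
      proof (cases "isB0 w")
        case True
        have ri: "RowInv W1' w (Suc r) c" using B True by blast
        show ?thesis using row_path[OF tail1 displace_B0[OF True] ri] r1 by simp
      next
        case False
        have "(\<forall>j. Suc c \<le> j \<longrightarrow> j \<le> snd S1 \<longrightarrow> (\<exists>i e. U (i,j) = Some e \<and> isB1 e))
         \<and> (\<forall>c'. Suc c \<le> c' \<longrightarrow> snd S1 < c' \<or> (\<exists>W' y'. run W' (ColIns y' c') U S1 \<and> isB1 y'))"
          using col_basic[OF tail1 displace_B1[OF False] False y1'] by blast
        then show ?thesis by (simp add: Suc_le_eq)
      qed
      then show "\<forall>j. c < j \<longrightarrow> j \<le> snd S1 \<longrightarrow> (\<exists>i e. U (i,j) = Some e \<and> isB1 e)"
        "\<forall>c''. c < c'' \<longrightarrow> snd S1 < c'' \<or> (\<exists>W' y'. run W' (ColIns y' c'') U S1 \<and> isB1 y')" by blast+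
    qed
    have cU: "(r,c) \<in> dom U" using Urc by auto
    show ?thesis
    using R2 proof (cases rule: row_run)
      case new
      define L where "L = rowlen U r"
      have S2: "S2 = (r, L+1)" using new rl L_def by simp
      have cL: "c \<le> L" using rowlen_iff[OF yU, of r c] cU L_def by auto
      have noE2: "\<not>(\<exists>c e. U (r,c) = Some e \<and> z' < e)" using new(1) rowr by simp
      show ?thesis
      proof (rule ccontr)
        assume "\<not> snd S1 < snd S2"
        then have "L + 1 \<le> snd S1" using S2 by simp
        moreover have "c < L + 1" using cL by simp
        ultimately have "\<exists>i e. U (i, L+1) = Some e \<and> isB1 e" using B1col by blast
        then obtain i e where ie: "U (i, L+1) = Some e" "isB1 e" by blast
        have iU: "(i, L+1) \<in> dom U" using ie by auto
        show False
        proof (cases "r \<le> i")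
          case True
          then have "(r, L+1) \<in> dom U" using young_down[OF yU iU, of r "L+1"] r1 by simp
          then show False using rowlen_iff[OF yU, of r "L+1"] L_def by auto
        next
          case False
          have "1 \<le> i" using young_mem[OF yU iU] by simp
          then have "1 < r" using False by simp
          then have nb: "1 \<le> \<beta>2" "\<forall>a. U (r,\<beta>2) = Some a \<longrightarrow> z' < a"
            "\<forall>i<r. \<forall>j\<le>\<beta>2. \<forall>e. U (i,j) = Some e \<longrightarrow> isB0 e" using P(9) by auto
          have "U (r, \<beta>2) = None" using nb(2) noE2 by (metis option.exhaust)
          then have "L < \<beta>2" using rowlen_iff[OF yU, of r \<beta>2] nb(1) L_def by auto
          then show False using nb(3) ie False by (metis Suc_eq_plus1 Suc_leI not_le)
        qed
      qed
    next
      case (bump c' w')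
      have Urc': "U (r,c') = Some w'" using bump(1) rowr by simp
      have cc: "c < c'"
      proof (rule ccontr)
        assume "\<not> c < c'"
        then have "c' \<le> c" by simp
        then have "w' \<le> z" using Urow_le Urc' by blast
        then show False using bump(2) zz by simp
      qed
      have c'U: "(r,c') \<in> dom U" using Urc' by auto
      have c'1: "1 \<le> c'" using young_mem[OF yU c'U] by simp
      have c'b: "c' \<le> \<beta>2" if "1 < r"
      proof (rule ccontr)
        assume "\<not> c' \<le> \<beta>2"
        have nb: "1 \<le> \<beta>2" "\<forall>a. U (r,\<beta>2) = Some a \<longrightarrow> z' < a" using P(9) that by auto
        have "(r, \<beta>2) \<in> dom U" using young_down[OF yU c'U, of r \<beta>2] r1 nb(1) \<open>\<not> c' \<le> \<beta>2\<close> by simp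
        then obtain a where a: "U (r,\<beta>2) = Some a" by auto
        then have "z' < a" using nb by blast
        moreover have "T (r, \<beta>2) = Some a" using a rowr by simp
        moreover have "\<beta>2 < c'" using \<open>\<not> c' \<le> \<beta>2\<close> by simp
        ultimately show False using bump(3) by blast
      qed
      have Ubelow: "\<forall>i j e. i < Suc r \<longrightarrow> j \<le> c' \<longrightarrow> (i,j) \<noteq> (r,c') \<longrightarrow> U (i,j) = Some e \<longrightarrow> isB0 e"
      proof (intro allI impI)
        fix i j e assume "i < Suc r" "j \<le> c'" "(i,j) \<noteq> (r,c')" "U (i,j) = Some e"
        show "isB0 e"
        proof (cases "i = r")
          case True
          then have "j < c'" using \<open>j \<le> c'\<close> \<open>(i,j) \<noteq> (r,c')\<close> by auto
          have "T (r,j) = Some e" using \<open>U (i,j) = Some e\<close> True rowr by simp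
          then have "e \<le> z'" using bump(3) \<open>j < c'\<close> by (meson not_less_entry)
          then show ?thesis using z'B le_B0 by blast
        next
          case False
          then have "i < r" using \<open>i < Suc r\<close> by simp
          have iU: "(i,j) \<in> dom U" using \<open>U (i,j) = Some e\<close> by auto
          have "1 \<le> i" using young_mem[OF yU iU] by simp
          then have "1 < r" using \<open>i < r\<close> by simp
          then have "j \<le> \<beta>2" using c'b \<open>j \<le> c'\<close> by simp
          moreover have "\<forall>i<r. \<forall>j\<le>\<beta>2. \<forall>e. U (i,j) = Some e \<longrightarrow> isB0 e" using P(9) \<open>1 < r\<close> by blast
          ultimately show ?thesis using \<open>i < r\<close> \<open>U (i,j) = Some e\<close> by blast
        qed
      qed
      have st2: "(T', s') = (T((r,c') := Some z'), displace w' (r,c'))"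
        using bump(5) run_step.hyps(1) P(1) by metis
      show ?thesis
      proof (cases "isB0 w'")
        case True
        have W1rc': "W1 (r,c') = Some w'" using UB0_unch[OF Urc' True] W1'_def cc by simp
        have ww: "w \<le> w'" using row_trans'[OF t1 b1(1) W1rc'] cc by simp
        have wB0: "isB0 w" using le_B0[OF ww True] .
        have s': "s' = RowIns w' (Suc r)" using st2 displace_B0[OF True] by simp
        have T'd: "T' = T((r,c') := Some z')" using st2 by simp
        have tl1: "run W1' (RowIns w (Suc r)) U S1" using tail1 displace_B0[OF wB0] by simp
        have ri: "RowInv W1' w (Suc r) c" using B wB0 by blast
        have eq': "\<forall>i j. Suc r \<le> i \<longrightarrow> T' (i,j) = U (i,j)" using P(7) T'd by auto
        have diff': "\<forall>p. T' p \<noteq> U p \<longrightarrow> (\<exists>a. T' p = Some a \<and> isB0 a) \<and> (\<exists>b. U p = Some b \<and> isB0 b)"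
        proof (intro allI impI)
          fix p assume "T' p \<noteq> U p"
          show "(\<exists>a. T' p = Some a \<and> isB0 a) \<and> (\<exists>b. U p = Some b \<and> isB0 b)"
          proof (cases "p = (r,c')")
            case True then show ?thesis using T'd Urc' True z'B \<open>isB0 w'\<close> by simp
          next
            case False
            then have "T' p = T p" using T'd by simp
            then show ?thesis using P(8) \<open>T' p \<noteq> U p\<close> by metis
          qed
        qed
        have nb': "1 < Suc r \<longrightarrow> 1 \<le> c' \<and> (\<forall>a. U (Suc r, c') = Some a \<longrightarrow> w' < a) \<and> (\<forall>i<Suc r. \<forall>j\<le>c'. \<forall>e. U (i,j) = Some e \<longrightarrow> isB0 e)"
        proof (intro impI conjI allI)
          show "1 \<le> c'" using c'1 .
        next
          fix a assume "U (Suc r, c') = Some a"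
          then show "w' < a" using tab_colI[OF tU Urc'] True by blast
        next
          fix i j e assume "i < Suc r" "j \<le> c'" "U (i,j) = Some e"
          then show "isB0 e" using Ubelow Urc' True by (cases "(i,j) = (r,c')") auto
        qed
        show ?thesis using run_step.IH[OF s' tl1 ri tU True ww eq' diff' nb'] .
      next
        case False
        have s': "s' = ColIns w' (Suc c')" using st2 displace_B1[OF False] by simp
        have T'd: "T' = T((r,c') := Some z')" using st2 by simp
        have tl2: "run T' (ColIns w' (Suc c')) V S2" using run_step.hyps(3) s' by simp
        have ag: "Agree T' U (Suc c')"
          unfolding Agree_def
        proof (intro allI impI)
          fix i j e assume "Suc c' \<le> j" "isB1 e"
          then have "T' (i,j) = T (i,j)" using T'd by auto
          moreover have "T (i,j) = Some e \<longleftrightarrow> U (i,j) = Some e"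
          proof (cases "T (i,j) = U (i,j)")
            case False
            then show ?thesis using P(8) \<open>isB1 e\<close> by force
          qed simp
          ultimately show "T' (i,j) = Some e \<longleftrightarrow> U (i,j) = Some e" by simp
        qed
        have H: "\<forall>i<r. \<forall>e. U (i,c') = Some e \<longrightarrow> isB0 e"
        proof (intro allI impI)
          fix i e assume "i < r" "U (i,c') = Some e"
          moreover have "i < Suc r" "(i,c') \<noteq> (r,c')" using \<open>i < r\<close> by auto
          ultimately show "isB0 e" using Ubelow by blast
        qed
        have "Suc c' \<le> snd S2" using col_simple[OF tl2 refl False] by simp
        show ?thesis
        proof (cases "snd S1 < c'")
          case True then show ?thesis using \<open>Suc c' \<le> snd S2\<close> by simp
        next
          case False
          then obtain W' y' where W': "run W' (ColIns y' c') U S1" "isB1 y'" using reach cc by blast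
          show ?thesis using col_start[OF W'(1) W'(2) tl2 \<open>isB1 w'\<close> Urc' H ag] .
        qed
      qed
    qed
  qed
qed


lemma spo_tab_ok:
  assumes "spo_tableau m n T"
  shows "tab_ok T"
proof -
  have y: "is_young (dom T)" using assms unfolding spo_tableau_def by (elim conjE) assumption
  define B where "B = {p. \<exists>e. T p = Some e \<and> isB0 e}"
  have yB: "is_young B" using assms unfolding spo_tableau_def B_def by (elim conjE) assumption
  have r0: "\<forall>i j a b. T (i,j) = Some a \<longrightarrow> T (i,j+1) = Some b \<longrightarrow> isB0 a \<longrightarrow> isB0 b \<longrightarrow> a \<le> b"
    using assms unfolding spo_tableau_def by (elim conjE) assumption
  have c0: "\<forall>i j a b. T (i,j) = Some a \<longrightarrow> T (i+1,j) = Some b \<longrightarrow> isB0 a \<longrightarrow> isB0 b \<longrightarrow> a < b"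
    using assms unfolding spo_tableau_def by (elim conjE) assumption
  have r1: "\<forall>i j a b. T (i,j) = Some a \<longrightarrow> T (i,j+1) = Some b \<longrightarrow> isB1 a \<longrightarrow> isB1 b \<longrightarrow> a < b"
    using assms unfolding spo_tableau_def by (elim conjE) assumption
  have c1: "\<forall>i j a b. T (i,j) = Some a \<longrightarrow> T (i+1,j) = Some b \<longrightarrow> isB1 a \<longrightarrow> isB1 b \<longrightarrow> a \<le> b"
    using assms unfolding spo_tableau_def by (elim conjE) assumption
  have ro: "RowOrd T"
    unfolding RowOrd_def
  proof (intro allI impI)
    fix i j a b assume a: "T (i,j) = Some a" and b: "T (i, Suc j) = Some b"
    show "a \<le> b \<and> (isB1 a \<longrightarrow> a < b)"
    proof (cases "isB0 b")
      case True
      then have "(i, Suc j) \<in> B" using b B_def by auto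
      moreover have "(i,j) \<in> dom T" using a by auto
      ultimately have "(i,j) \<in> B" using young_down[OF yB, of i "Suc j" i j] young_mem[OF y, of i j] by auto
      then have "isB0 a" using a B_def by auto
      moreover have "T (i, j+1) = Some b" using b by simp
      ultimately have "a \<le> b" using r0 a True by blast
      then show ?thesis using \<open>isB0 a\<close> by simp
    next
      case False
      have b': "T (i, j+1) = Some b" using b by simp
      show ?thesis
      proof (cases "isB0 a")
        case True
        then have "a < b" using B0_less_B1 False by blast
        then show ?thesis by simp
      next
        case False
        then have "a < b" using r1 a b' \<open>\<not> isB0 b\<close> by blast
        then show ?thesis by simp
      qed
    qed
  qed
  have co: "ColOrd T"
    unfolding ColOrd_def
  proof (intro allI impI)
    fix i j a b assume a: "T (i,j) = Some a" and b: "T (Suc i, j) = Some b"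
    show "a \<le> b \<and> (isB0 a \<longrightarrow> a < b)"
    proof (cases "isB0 b")
      case True
      then have "(Suc i, j) \<in> B" using b B_def by auto
      moreover have "(i,j) \<in> dom T" using a by auto
      ultimately have "(i,j) \<in> B" using young_down[OF yB, of "Suc i" j i j] young_mem[OF y, of i j] by auto
      then have "isB0 a" using a B_def by auto
      moreover have "T (i+1, j) = Some b" using b by simp
      ultimately have "a < b" using c0 a True by blast
      then show ?thesis by simp
    next
      case False
      have b': "T (i+1, j) = Some b" using b by simp
      show ?thesis
      proof (cases "isB0 a")
        case True
        then have "a < b" using B0_less_B1 False by blast
        then show ?thesis by simp
      next
        case False
        then have "a \<le> b" using c1 a b' \<open>\<not> isB0 b\<close> by blast
        then show ?thesis using False by simp
      qed
    qed
  qed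
  show ?thesis using y ro co unfolding tab_ok_def by simp
qed

theorem mainTheorem4:
  fixes m n :: nat and T U V :: tab and x1 x2 :: entry and S1 S2 :: "nat \<times> nat"
  assumes "spo_tableau m n T"
    and "inB0 m x1" and "inB0 m x2" and "x1 \<le> x2"
    and "ins_newbox T x1 U S1"
    and "ins_newbox U x2 V S2"
  shows "snd S1 < snd S2 \<and> fst S2 \<le> fst S1"
proof -
  have tT: "tab_ok T" using spo_tab_ok[OF assms(1)] .
  have x1B: "isB0 x1" using assms(2) unfolding inB0_def by auto
  have x2B: "isB0 x2" using assms(3) unfolding inB0_def by auto
  have R1: "run T (RowIns x1 1) U S1" using assms(5) funpow_run unfolding ins_newbox_def by blast
  have R2: "run U (RowIns x2 1) V S2" using assms(6) funpow_run unfolding ins_newbox_def by blast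
  have inv1: "RowInv T x1 1 0" using tT x1B unfolding RowInv_def by simp
  have tU: "tab_ok U" using row_path[OF R1 refl inv1] by simp
  have inv2: "RowInv U x2 1 0" using tU x2B unfolding RowInv_def by simp
  have tV: "tab_ok V" using row_path[OF R2 refl inv2] by simp
  have yT: "is_young (dom T)" and yU: "is_young (dom U)" and yV: "is_young (dom V)"
    using tT tU tV tab_young by blast+
  have col: "snd S1 < snd S2"
    using lockstep[OF R2 refl R1 inv1 tU x2B assms(4), of 0] by simp
  have d1: "dom U = insert S1 (dom T) \<and> S1 \<notin> dom T" using row_basic[OF R1 refl x1B yT] by blast
  have d2: "dom V = insert S2 (dom U) \<and> S2 \<notin> dom U" using row_basic[OF R2 refl x2B yU] by blast
  obtain a1 b1 where s1: "S1 = (a1,b1)" by fastforce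
  obtain a2 b2 where s2: "S2 = (a2,b2)" by fastforce
  have row: "a2 \<le> a1"
  proof (rule ccontr)
    assume "\<not> a2 \<le> a1"
    have S1U: "(a1,b1) \<in> dom U" using d1 s1 by simp
    have S2V: "(a2,b2) \<in> dom V" using d2 s2 by simp
    have a11: "1 \<le> a1" "1 \<le> b1" using young_mem[OF yU S1U] by auto
    have "(a1, b2) \<in> dom V" using young_down[OF yV S2V, of a1 b2] a11 \<open>\<not> a2 \<le> a1\<close> young_mem[OF yV S2V] by simp
    then have "(a1, b2) \<in> dom U" using d2 s2 \<open>\<not> a2 \<le> a1\<close> by auto
    then have "(a1, b1+1) \<in> dom U" using young_down[OF yU, of a1 b2 a1 "b1+1"] a11 col s1 s2 by simp
    then have "(a1, b1+1) \<in> dom T" using d1 s1 by auto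
    then have "(a1, b1) \<in> dom T" using young_down[OF yT, of a1 "b1+1" a1 b1] a11 by simp
    then show False using d1 s1 by simp
  qed
  show ?thesis using col row s1 s2 by simp
qed

end
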